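(* Let $M:[0,1]\to\mathbb{R}^d$ be a continuous martingale with $M_0=0$, let $D$ be a partition of $[0,1]$ and $M^D$ the Hoff process of $M$. If $\delta\ge|D|$ then \[ \sup_{|t-s|\le\delta}|M^D_{s,t}|\le 3\sup_{|t-s|\le2\delta}|M_{s,t}|. \]
   Context: A partition $D=(t_i)_{i=0}^n$ of $[0,1]$ satisfies $0=t_0<\dots<t_n=1$, mesh $|D|=\max_i|t_{i+1}-t_i|$, $t_i^*=\tfrac12(t_i+t_{i+1})$. The Hoff process of a continuous path $x:[0,1]\to\mathbb{R}^d$ with $x_0=0$ is the piecewise-linear path $x^D=(x^{D,b},x^{D,f}):[0,1]\to\mathbb{R}^{2d}$ given by: $x^D_u=(x_{t_{i-1}}+\frac{u-t_i}{t_i^*-t_i}(x_{t_i}-x_{t_{i-1}});\,x_{t_{i+1}})$ for $u\in[t_i,t_i^* )$, $i=1,\dots,n-1$; $x^D_u=(x_{t_i};\,x_{t_{i+1}}+\frac{u-t_i^*}{t_{i+1}-t_i^*}(x_{t_{i+2}}-x_{t_{i+1}}))$ for $u\in[t_i^*,t_{i+1})$, $i=0,\dots,n-2$; $x^D_u=(0;\,\frac{u}{t_0^*}x_{t_1})$ for $u\in[0,t_0^* )$; $x^D_u=(x_{t_{n-1}}+\frac{u-t_{n-1}^*}{t_n-t_{n-1}^*}(x_{t_n}-x_{t_{n-1}});\,x_{t_n})$ for $u\in[t_{n-1}^*,1]$. Increments $x_{s,t}=x_t-x_s$; suprema are over $s,t\in[0,1]$. *)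

theory Defs
  imports "HOL-Probability.Probability"
begin

definition is_partition :: "(nat \<Rightarrow> real) \<Rightarrow> nat \<Rightarrow> bool" where
  "is_partition t n \<longleftrightarrow> n \<ge> 1 \<and> t 0 = 0 \<and> t n = 1 \<and> (\<forall>i<n. t i < t (Suc i))"

definition mesh :: "(nat \<Rightarrow> real) \<Rightarrow> nat \<Rightarrow> real" where
  "mesh t n = Max ((\<lambda>i. t (Suc i) - t i) ` {..<n})"

definition midpt :: "(nat \<Rightarrow> real) \<Rightarrow> nat \<Rightarrow> real" where
  "midpt t i = (t i + t (Suc i)) / 2"

text \<open>Index of the partition interval \<open>[t i, t (i+1))\<close> containing \<open>u\<close> (last one for \<open>u = 1\<close>).\<close>
definition part_index :: "(nat \<Rightarrow> real) \<Rightarrow> nat \<Rightarrow> real \<Rightarrow> nat" where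
  "part_index t n u = (GREATEST i. i < n \<and> t i \<le> u)"

definition hoff :: "(real \<Rightarrow> 'b::real_vector) \<Rightarrow> (nat \<Rightarrow> real) \<Rightarrow> nat \<Rightarrow> real \<Rightarrow> 'b \<times> 'b" where
  "hoff x t n u =
    (let i = part_index t n u in
     if u < midpt t i then
       (if i = 0 then (0, (u / midpt t 0) *\<^sub>R x (t 1))
        else (x (t (i - 1)) + ((u - t i) / (midpt t i - t i)) *\<^sub>R (x (t i) - x (t (i - 1))),
              x (t (Suc i))))
     else
       (if i + 1 < n then
          (x (t i), x (t (Suc i)) + ((u - midpt t i) / (t (Suc i) - midpt t i)) *\<^sub>R
                        (x (t (Suc (Suc i))) - x (t (Suc i))))
        else (x (t (n - 1)) + ((u - midpt t (n - 1)) / (t n - midpt t (n - 1))) *\<^sub>R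
                        (x (t n) - x (t (n - 1))), x (t n))))"

definition cont_martingale ::
  "'a measure \<Rightarrow> (real \<Rightarrow> 'a measure) \<Rightarrow> (real \<Rightarrow> 'a \<Rightarrow> real ^ 'd) \<Rightarrow> bool" where
  "cont_martingale P F X \<longleftrightarrow>
     prob_space P \<and>
     (\<forall>t\<in>{0..1}. subalgebra P (F t)) \<and>
     (\<forall>s t. 0 \<le> s \<longrightarrow> s \<le> t \<longrightarrow> t \<le> 1 \<longrightarrow> subalgebra (F t) (F s)) \<and>
     (\<forall>t\<in>{0..1}. \<forall>i. (\<lambda>\<omega>. X t \<omega> $ i) \<in> borel_measurable (F t) \<and> integrable P (\<lambda>\<omega>. X t \<omega> $ i)) \<and>
     (\<forall>s t. 0 \<le> s \<longrightarrow> s \<le> t \<longrightarrow> t \<le> 1 \<longrightarrow> (\<forall>i.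
        AE \<omega> in P. real_cond_exp P (F s) (\<lambda>\<omega>. X t \<omega> $ i) \<omega> = X s \<omega> $ i)) \<and>
     (\<forall>\<omega>\<in>space P. continuous_on {0..1} (\<lambda>t. X t \<omega>))"

end

theory Submission
  imports Defs
begin

lemma part_lt:
  assumes "is_partition t n" "i < j" "j \<le> n" shows "t i < t j"
  using assms(2,3)
proof (induction j)
  case 0 then show ?case by simp
next
  case (Suc j)
  have s: "t j < t (Suc j)" using assms(1) Suc.prems unfolding is_partition_def by auto
  show ?case
  proof (cases "i = j")
    case True then show ?thesis using s by simp
  next
    case False then have "t i < t j" using Suc by auto
    then show ?thesis using s by simp
  qed
qed

lemma part_le:
  assumes "is_partition t n" "i \<le> j" "j \<le> n" shows "t i \<le> t j"
  using part_lt[OF assms(1)] assms(2,3) by (cases "i = j") (auto intro: less_imp_le)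

lemma part_range:
  assumes "is_partition t n" "i \<le> n" shows "0 \<le> t i" "t i \<le> 1"
  using part_le[OF assms(1), of 0 i] part_le[OF assms(1), of i n] assms
  unfolding is_partition_def by auto

lemma part_index_props:
  assumes p: "is_partition t n" and u: "0 \<le> u" "u \<le> 1"
  defines "i \<equiv> part_index t n u"
  shows "i < n" "t i \<le> u" "u \<le> t (Suc i)" "Suc i < n \<Longrightarrow> u < t (Suc i)"
proof -
  let ?P = "\<lambda>i. i < n \<and> t i \<le> u"
  have P0: "?P 0" using p u unfolding is_partition_def by auto
  have bd: "\<And>y. ?P y \<Longrightarrow> y \<le> n" by auto
  have Pi: "?P i" unfolding i_def part_index_def using GreatestI_nat[of ?P 0 n, OF P0 bd] .
  then show "i < n" "t i \<le> u" by auto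
  show lt: "u < t (Suc i)" if "Suc i < n"
  proof (rule ccontr)
    assume "\<not> u < t (Suc i)"
    then have "?P (Suc i)" using that by auto
    then have "Suc i \<le> Greatest ?P" using Greatest_le_nat[of ?P "Suc i" n, OF _ bd] by blast
    then have "Suc i \<le> i" unfolding i_def part_index_def .
    then show False by simp
  qed
  show "u \<le> t (Suc i)"
  proof (cases "Suc i < n")
    case True then show ?thesis using lt by simp
  next
    case False then have "Suc i = n" using Pi by auto
    then show ?thesis using p u unfolding is_partition_def by auto
  qed
qed

definition rep :: "(real \<Rightarrow> 'b::real_vector) \<Rightarrow> real \<Rightarrow> real \<Rightarrow> 'b \<Rightarrow> bool" where
  "rep x m u y \<longleftrightarrow> (\<exists>a b l. 0 \<le> l \<and> l \<le> 1 \<and> a \<in> {0..1} \<and> b \<in> {0..1} \<and>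
      \<bar>a - u\<bar> \<le> 3/2*m \<and> \<bar>b - u\<bar> \<le> 3/2*m \<and> y = x a + l *\<^sub>R (x b - x a))"

lemma rep_const: "a \<in> {0..1} \<Longrightarrow> \<bar>a - u\<bar> \<le> 3/2*m \<Longrightarrow> rep x m u (x a)"
  unfolding rep_def by (rule exI[of _ a], rule exI[of _ a], rule exI[of _ 0]) auto

lemma hoff_repr:
  fixes x :: "real \<Rightarrow> 'b::real_vector"
  assumes p: "is_partition t n" and u: "0 \<le> u" "u \<le> 1" and x0: "x 0 = 0"
    and mesh: "\<And>i. i < n \<Longrightarrow> t (Suc i) - t i \<le> m"
  shows "rep x m u (fst (hoff x t n u)) \<and> rep x m u (snd (hoff x t n u))"
proof -
  define i where "i = part_index t n u"
  note ip = part_index_props[OF p u, folded i_def]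
  have t0: "t 0 = 0" and tn: "t n = 1" using p unfolding is_partition_def by auto
  have rng: "t k \<in> {0..1}" if "k \<le> n" for k using part_range[OF p that] by auto
  have mi: "t (Suc i) - t i \<le> m" using mesh ip(1) .
  have lti: "t i < t (Suc i)" using p ip(1) unfolding is_partition_def by auto
  define mid where "mid = midpt t i"
  have mid: "mid = (t i + t (Suc i))/2" unfolding mid_def midpt_def by simp
  have h: "hoff x t n u =
    (if u < mid then
       (if i = 0 then (0, (u / midpt t 0) *\<^sub>R x (t 1))
        else (x (t (i - 1)) + ((u - t i) / (mid - t i)) *\<^sub>R (x (t i) - x (t (i - 1))),
              x (t (Suc i))))
     else
       (if i + 1 < n then
          (x (t i), x (t (Suc i)) + ((u - mid) / (t (Suc i) - mid)) *\<^sub>R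
                        (x (t (Suc (Suc i))) - x (t (Suc i))))
        else (x (t (n - 1)) + ((u - midpt t (n - 1)) / (t n - midpt t (n - 1))) *\<^sub>R
                        (x (t n) - x (t (n - 1))), x (t n))))"
    unfolding hoff_def Let_def i_def mid_def by simp
  show ?thesis
  proof (cases "u < mid")
    case True
    show ?thesis
    proof (cases "i = 0")
      case i0: True
      have e: "hoff x t n u = (0, (u / mid) *\<^sub>R x (t 1))" using h True i0 mid_def by simp
      have m0: "mid > 0" using mid lti i0 t0 by simp
      have "rep x m u 0" using rep_const[of 0 u m x] x0 u mi i0 t0 ip by auto
      moreover have "rep x m u ((u / mid) *\<^sub>R x (t 1))"
        unfolding rep_def
        apply (rule exI[of _ 0], rule exI[of _ "t 1"], rule exI[of _ "u/mid"])
        using m0 True u mi i0 t0 ip rng[of 1] x0 by auto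
      ultimately show ?thesis using e by simp
    next
      case i1: False
      have e: "hoff x t n u = (x (t (i - 1)) + ((u - t i) / (mid - t i)) *\<^sub>R (x (t i) - x (t (i - 1))),
              x (t (Suc i)))" using h True i1 by simp
      have mi': "t i - t (i - 1) \<le> m" using mesh[of "i-1"] i1 ip(1) by simp
      have "rep x m u (x (t (i - 1)) + ((u - t i) / (mid - t i)) *\<^sub>R (x (t i) - x (t (i - 1))))"
        unfolding rep_def
        apply (rule exI[of _ "t (i - 1)"], rule exI[of _ "t i"], rule exI[of _ "(u - t i) / (mid - t i)"])
        using True u mi mi' ip rng[of i] rng[of "i-1"] mid lti part_le[OF p, of "i-1" i] by (auto simp: field_simps)
      moreover have "rep x m u (x (t (Suc i)))"
        by (intro rep_const) (use ip mi rng[of "Suc i"] in auto)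
      ultimately show ?thesis using e by simp
    qed
  next
    case False
    show ?thesis
    proof (cases "i + 1 < n")
      case True
      have e: "hoff x t n u = (x (t i), x (t (Suc i)) + ((u - mid) / (t (Suc i) - mid)) *\<^sub>R
                        (x (t (Suc (Suc i))) - x (t (Suc i))))" using h True False by simp
      have mi': "t (Suc (Suc i)) - t (Suc i) \<le> m" using mesh[of "Suc i"] True by simp
      have us: "u < t (Suc i)" using ip(4) True by simp
      have "rep x m u (x (t i))" by (intro rep_const) (use ip mi rng[of i] mid False in auto)
      moreover have "rep x m u (x (t (Suc i)) + ((u - mid) / (t (Suc i) - mid)) *\<^sub>R
                        (x (t (Suc (Suc i))) - x (t (Suc i))))"
        unfolding rep_def
        apply (rule exI[of _ "t (Suc i)"], rule exI[of _ "t (Suc (Suc i))"], rule exI[of _ "(u - mid) / (t (Suc i) - mid)"])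
        using False u mi mi' ip us rng[of "Suc i"] rng[of "Suc (Suc i)"] True mid lti part_lt[OF p, of "Suc i" "Suc (Suc i)"]
        by (auto simp: field_simps)
      ultimately show ?thesis using e by simp
    next
      case nl: False
      have ii: "i = n - 1" using nl ip(1) by simp
      have e: "hoff x t n u = (x (t i) + ((u - mid) / (t n - mid)) *\<^sub>R
                        (x (t n) - x (t i)), x (t n))" using h nl False ii mid_def by simp
      have sn: "Suc i = n" using ii ip(1) by simp
      have "rep x m u (x (t i) + ((u - mid) / (t n - mid)) *\<^sub>R (x (t n) - x (t i)))"
        unfolding rep_def
        apply (rule exI[of _ "t i"], rule exI[of _ "t n"], rule exI[of _ "(u - mid) / (t n - mid)"])
        using False u mi ip rng[of i] rng[of n] sn mid lti tn
        by (auto simp: field_simps)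
      moreover have "rep x m u (x (t n))"
        by (intro rep_const) (use ip mi rng[of n] sn mid False in auto)
      ultimately show ?thesis using e by simp
    qed
  qed
qed

lemma rep_close:
  fixes x :: "real \<Rightarrow> 'b::real_normed_vector"
  assumes r: "rep x m u y" and W: "\<And>a. a \<in> {0..1} \<Longrightarrow> \<bar>a - \<tau>\<bar> \<le> c \<Longrightarrow> norm (x a - x \<tau>) \<le> W"
    and c: "\<bar>u - \<tau>\<bar> + 3/2*m \<le> c"
  shows "norm (y - x \<tau>) \<le> W"
proof -
  obtain a b l where l: "0 \<le> l" "l \<le> 1" and ab: "a \<in> {0..1}" "b \<in> {0..1}"
    "\<bar>a - u\<bar> \<le> 3/2*m" "\<bar>b - u\<bar> \<le> 3/2*m" and y: "y = x a + l *\<^sub>R (x b - x a)"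
    using r unfolding rep_def by blast
  have "\<bar>a - \<tau>\<bar> \<le> c" using ab(3) c by linarith
  then have Wa: "norm (x a - x \<tau>) \<le> W" using W[of a] ab by auto
  have "\<bar>b - \<tau>\<bar> \<le> c" using ab(4) c by linarith
  then have Wb: "norm (x b - x \<tau>) \<le> W" using W[of b] ab by auto
  have "y - x \<tau> = (1 - l) *\<^sub>R (x a - x \<tau>) + l *\<^sub>R (x b - x \<tau>)"
    unfolding y by (simp add: algebra_simps)
  then have "norm (y - x \<tau>) \<le> (1 - l) * norm (x a - x \<tau>) + l * norm (x b - x \<tau>)"
    using norm_triangle_ineq[of "(1 - l) *\<^sub>R (x a - x \<tau>)" "l *\<^sub>R (x b - x \<tau>)"] l by simp
  also have "\<dots> \<le> (1 - l) * W + l * W"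
    using l Wa Wb by (intro add_mono mult_left_mono) auto
  finally show ?thesis by (simp add: algebra_simps)
qed

theorem mainTheorem13:
  fixes P :: "'a measure" and F :: "real \<Rightarrow> 'a measure"
    and M :: "real \<Rightarrow> 'a \<Rightarrow> real ^ 'd"
    and t :: "nat \<Rightarrow> real" and n :: nat and \<delta> :: real and \<omega> :: 'a
  assumes "cont_martingale P F M"
    and "\<forall>\<omega>\<in>space P. M 0 \<omega> = 0"
    and "is_partition t n"
    and "\<delta> \<ge> mesh t n"
    and "\<omega> \<in> space P"
  shows "(SUP (s, u) \<in> {(s, u). s \<in> {0..1} \<and> u \<in> {0..1} \<and> \<bar>u - s\<bar> \<le> \<delta>}.
            norm (hoff (\<lambda>r. M r \<omega>) t n u - hoff (\<lambda>r. M r \<omega>) t n s))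
         \<le> 3 * (SUP (s, u) \<in> {(s, u). s \<in> {0..1} \<and> u \<in> {0..1} \<and> \<bar>u - s\<bar> \<le> 2 * \<delta>}.
            norm (M u \<omega> - M s \<omega>))"
proof -
  define x where "x = (\<lambda>r. M r \<omega>)"
  note p = assms(3)
  have x0: "x 0 = 0" using assms(2,5) unfolding x_def by auto
  have cont: "continuous_on {0..1} x" using assms(1,5) unfolding cont_martingale_def x_def by auto
  have "compact (x ` {0..1})" by (rule compact_continuous_image[OF cont]) simp
  then obtain B where B: "\<And>r. r \<in> {0..1} \<Longrightarrow> norm (x r) \<le> B"
    using compact_imp_bounded bounded_iff by (metis image_eqI)
  define S2 where "S2 = {(s, u). s \<in> {0..1} \<and> u \<in> {0..1} \<and> \<bar>u - s\<bar> \<le> 2 * \<delta>}"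
  define W where "W = (SUP (s, u) \<in> S2. norm (x u - x s))"
  have bdd: "bdd_above ((\<lambda>(s, u). norm (x u - x s)) ` S2)"
  proof (rule bdd_aboveI2[of _ _ "2 * B"])
    fix z assume "z \<in> S2"
    then obtain s u where z: "z = (s, u)" "s \<in> {0..1}" "u \<in> {0..1}" unfolding S2_def by auto
    have "norm (x u - x s) \<le> norm (x u) + norm (x s)" by (rule norm_triangle_ineq4)
    also have "\<dots> \<le> 2 * B" using B[OF z(2)] B[OF z(3)] by simp
    finally show "(case z of (s, u) \<Rightarrow> norm (x u - x s)) \<le> 2 * B" using z by simp
  qed
  have Wle: "norm (x a - x \<tau>) \<le> W" if "a \<in> {0..1}" "\<tau> \<in> {0..1}" "\<bar>a - \<tau>\<bar> \<le> 2 * \<delta>" for a \<tau>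
  proof -
    have "(\<tau>, a) \<in> S2" using that unfolding S2_def by auto
    from cSUP_upper[OF this bdd] show ?thesis unfolding W_def by simp
  qed
  define m where "m = mesh t n"
  have n1: "n \<ge> 1" using p unfolding is_partition_def by simp
  have mesh: "t (Suc i) - t i \<le> m" if "i < n" for i
    unfolding m_def mesh_def by (rule Max_ge) (use that in auto)
  have md: "m \<le> \<delta>" using assms(4) m_def by simp
  have m0: "0 \<le> m" using mesh[of 0] n1 p unfolding is_partition_def by force
  have W0: "0 \<le> W" using Wle[of 0 0] using md m0 by (auto intro: order_trans[OF norm_ge_zero])
  define S1 where "S1 = {(s, u). s \<in> {0..1} \<and> u \<in> {0..1} \<and> \<bar>u - s\<bar> \<le> \<delta>}"
  have "(SUP (s, u) \<in> S1. norm (hoff x t n u - hoff x t n s)) \<le> 3 * W"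
  proof (rule cSUP_least)
    show "S1 \<noteq> {}" unfolding S1_def using md m0 by (auto intro!: exI[of _ 0])
  next
    fix z assume "z \<in> S1"
    then obtain s u where z: "z = (s, u)" "s \<in> {0..1}" "u \<in> {0..1}" "\<bar>u - s\<bar> \<le> \<delta>"
      unfolding S1_def by auto
    define \<tau> where "\<tau> = (s + u) / 2"
    have \<tau>: "\<tau> \<in> {0..1}" using z unfolding \<tau>_def by auto
    have Wt: "norm (x a - x \<tau>) \<le> W" if "a \<in> {0..1}" "\<bar>a - \<tau>\<bar> \<le> 2 * \<delta>" for a
      using Wle[OF that(1) \<tau> that(2)] .
    have cu: "\<bar>u - \<tau>\<bar> + 3/2*m \<le> 2 * \<delta>" and cs: "\<bar>s - \<tau>\<bar> + 3/2*m \<le> 2 * \<delta>"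
      using z md unfolding \<tau>_def by (auto simp: abs_if field_simps split: if_splits)
    have ru: "rep x m u (fst (hoff x t n u)) \<and> rep x m u (snd (hoff x t n u))"
      using z by (intro hoff_repr[OF p, where m=m]) (auto intro: mesh x0)
    have rs: "rep x m s (fst (hoff x t n s)) \<and> rep x m s (snd (hoff x t n s))"
      using z by (intro hoff_repr[OF p, where m=m]) (auto intro: mesh x0)
    have a1: "norm (fst (hoff x t n u) - x \<tau>) \<le> W" using rep_close[OF conjunct1[OF ru] Wt cu] z by auto
    have a2: "norm (snd (hoff x t n u) - x \<tau>) \<le> W" using rep_close[OF conjunct2[OF ru] Wt cu] z by auto
    have a3: "norm (fst (hoff x t n s) - x \<tau>) \<le> W" using rep_close[OF conjunct1[OF rs] Wt cs] z by auto
    have a4: "norm (snd (hoff x t n s) - x \<tau>) \<le> W" using rep_close[OF conjunct2[OF rs] Wt cs] z by auto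
    define A where "A = fst (hoff x t n u) - fst (hoff x t n s)"
    define C where "C = snd (hoff x t n u) - snd (hoff x t n s)"
    have "norm A \<le> norm (fst (hoff x t n u) - x \<tau>) + norm (fst (hoff x t n s) - x \<tau>)"
      unfolding A_def using norm_triangle_ineq4[of "fst (hoff x t n u) - x \<tau>" "fst (hoff x t n s) - x \<tau>"] by simp
    then have nA: "norm A \<le> 2 * W" using a1 a3 by simp
    have "norm C \<le> norm (snd (hoff x t n u) - x \<tau>) + norm (snd (hoff x t n s) - x \<tau>)"
      unfolding C_def using norm_triangle_ineq4[of "snd (hoff x t n u) - x \<tau>" "snd (hoff x t n s) - x \<tau>"] by simp
    then have nC: "norm C \<le> 2 * W" using a2 a4 by simp
    have eq: "hoff x t n u - hoff x t n s = (A, C)" unfolding A_def C_def by (simp add: prod_eq_iff)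
    have "(norm A)\<^sup>2 + (norm C)\<^sup>2 \<le> (3 * W)\<^sup>2"
    proof -
      have "(norm A)\<^sup>2 \<le> (2 * W)\<^sup>2" using nA by (intro power_mono) auto
      moreover have "(norm C)\<^sup>2 \<le> (2 * W)\<^sup>2" using nC by (intro power_mono) auto
      moreover have "0 \<le> W * W" using W0 by simp
      ultimately show ?thesis unfolding power2_eq_square by linarith
    qed
    then have "sqrt ((norm A)\<^sup>2 + (norm C)\<^sup>2) \<le> sqrt ((3 * W)\<^sup>2)"
      by (rule real_sqrt_le_mono)
    also have "\<dots> = 3 * W" using W0 by (simp only: real_sqrt_abs abs_of_nonneg)
    finally have "sqrt ((norm A)\<^sup>2 + (norm C)\<^sup>2) \<le> 3 * W" .
    then show "(case z of (s, u) \<Rightarrow> norm (hoff x t n u - hoff x t n s)) \<le> 3 * W"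
      using z eq by (simp add: norm_Pair)
  qed
  then show ?thesis unfolding S1_def W_def S2_def x_def .
qed

end
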